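(* For every $\widetilde r\in\mathbb{N}$, every $r_0\in\{0,\dots,b-1\}$ and every $d\in\mathbb{Z}$, \[\mu^{(b\widetilde r+r_0)}(d)=\frac{b-r_0}{b}\,\mu^{(\widetilde r)}(d-r_0)+\frac{r_0}{b}\,\mu^{(\widetilde r+1)}(d+b-r_0).\]
   Context: Fix an integer $b\ge2$. For $n\in\mathbb{N}$ with base-$b$ digits $n_k$, $s(n):=\sum_kn_k$. For $r,n\in\mathbb{N}$, $\Delta^{(r)}(n):=s(n+r)-s(n)$, and for $d\in\mathbb{Z}$, $\mu^{(r)}(d):=\lim_{N\to\infty}\frac1N|\{n<N:\Delta^{(r)}(n)=d\}|$ (these limits exist and define a probability measure on $\mathbb{Z}$; in particular $\mu^{(0)}=\delta_0$). *)

theory Defs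
  imports Complex_Main
begin

fun digit_sum :: "nat \<Rightarrow> nat \<Rightarrow> nat" where
  "digit_sum b n = (if b < 2 \<or> n = 0 then 0 else n mod b + digit_sum b (n div b))"

declare digit_sum.simps [simp del]

definition Delta :: "nat \<Rightarrow> nat \<Rightarrow> nat \<Rightarrow> int" where
  "Delta b r n = int (digit_sum b (n + r)) - int (digit_sum b n)"

definition mu :: "nat \<Rightarrow> nat \<Rightarrow> int \<Rightarrow> real" where
  "mu b r d = lim (\<lambda>N. real (card {n. n < N \<and> Delta b r n = d}) / real N)"

end

theory Submission
  imports Defs
begin

lemma ds_step:
  assumes "b \<ge> 2" "j < b"
  shows "digit_sum b (b*m + j) = digit_sum b m + j"
proof (cases "b*m + j = 0")
  case True
  then have "m = 0" "j = 0" using assms by auto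
  then show ?thesis by (simp add: digit_sum.simps)
next
  case False
  then have "digit_sum b (b*m+j) = (b*m+j) mod b + digit_sum b ((b*m+j) div b)"
    using assms by (subst digit_sum.simps) auto
  also have "(b*m+j) mod b = j" using assms by simp
  also have "(b*m+j) div b = m" using assms by simp
  finally show ?thesis by simp
qed

lemma Delta_lo:
  assumes "b \<ge> 2" "j + r0 < b"
  shows "Delta b (b*rt + r0) (b*m + j) = Delta b rt m + int r0"
proof -
  have e: "b*m + j + (b*rt+r0) = b*(m+rt) + (j+r0)" by (simp add: algebra_simps)
  have "digit_sum b (b*m + j + (b*rt+r0)) = digit_sum b (m+rt) + (j+r0)"
    unfolding e by (rule ds_step) (use assms in auto)
  then show ?thesis using assms ds_step[of b j m]
    by (simp add: Delta_def)
qed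

lemma Delta_hi:
  assumes "b \<ge> 2" "j < b" "r0 < b" "j + r0 \<ge> b"
  shows "Delta b (b*rt + r0) (b*m + j) = Delta b (rt+1) m + int r0 - int b"
proof -
  have e: "b*m + j + (b*rt+r0) = b*(m+(rt+1)) + (j+r0-b)" using assms by (simp add: algebra_simps)
  have "digit_sum b (b*m + j + (b*rt+r0)) = digit_sum b (m+(rt+1)) + (j+r0-b)"
    unfolding e by (rule ds_step) (use assms in auto)
  then show ?thesis using assms ds_step[of b j m]
    by (simp add: Delta_def of_nat_diff)
qed

definition cnt :: "nat \<Rightarrow> nat \<Rightarrow> int \<Rightarrow> nat \<Rightarrow> real" where
  "cnt b r d N = (\<Sum>n<N. if Delta b r n = d then 1 else 0)"

lemma card_cnt: "real (card {n. n < N \<and> Delta b r n = d}) = cnt b r d N"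
proof (induction N rule: nat.induct)
  case zero then show ?case by (simp add: cnt_def)
next
  case (Suc N)
  have e: "{n. n < Suc N \<and> Delta b r n = d} = {n. n < N \<and> Delta b r n = d} \<union> (if Delta b r N = d then {N} else {})"
    by (auto simp: less_Suc_eq)
  show ?case using Suc by (simp add: e cnt_def card_insert_if)
qed

lemma sum_blocks: "(\<Sum>n<b*M. (f::nat\<Rightarrow>real) n) = (\<Sum>m<M. \<Sum>j<b. f (b*m+j))"
proof (induction M)
  case 0 then show ?case by simp
next
  case (Suc M)
  have "{..<b*Suc M} = {..<b*M} \<union> {b*M..<b*M+b}" by auto
  then have "(\<Sum>n<b*Suc M. f n) = (\<Sum>n<b*M. f n) + (\<Sum>n\<in>{b*M..<b*M+b}. f n)"
    by (simp add: sum.union_disjoint ivl_disj_int)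
  also have "(\<Sum>n\<in>{b*M..<b*M+b}. f n) = (\<Sum>j<b. f (b*M+j))"
    using sum.atLeastLessThan_shift_0[of f "b*M" "b*M+b"] by (simp add: lessThan_atLeast0 comp_def add.commute)
  finally show ?case using Suc by simp
qed

lemma block:
  assumes "b \<ge> 2" "r0 < b"
  shows "(\<Sum>j<b. (if Delta b (b*rt+r0) (b*m+j) = d then 1 else 0::real))
    = real (b - r0) * (if Delta b rt m = d - int r0 then 1 else 0)
      + real r0 * (if Delta b (rt+1) m = d + int b - int r0 then 1 else 0)"
proof -
  have sp: "{..<b} = {0..<b-r0} \<union> {b-r0..<b}" using assms by auto
  have "(\<Sum>j<b. (if Delta b (b*rt+r0) (b*m+j) = d then 1 else 0::real))
     = (\<Sum>j\<in>{0..<b-r0}. (if Delta b (b*rt+r0) (b*m+j) = d then 1 else 0::real))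
     + (\<Sum>j\<in>{b-r0..<b}. (if Delta b (b*rt+r0) (b*m+j) = d then 1 else 0::real))"
    unfolding sp by (rule sum.union_disjoint) auto
  also have "(\<Sum>j\<in>{0..<b-r0}. (if Delta b (b*rt+r0) (b*m+j) = d then 1 else 0::real))
     = (\<Sum>j\<in>{0..<b-r0}. (if Delta b rt m = d - int r0 then 1 else 0))"
    by (rule sum.cong) (use assms Delta_lo in auto)
  also have "(\<Sum>j\<in>{b-r0..<b}. (if Delta b (b*rt+r0) (b*m+j) = d then 1 else 0::real))
     = (\<Sum>j\<in>{b-r0..<b}. (if Delta b (rt+1) m = d + int b - int r0 then 1 else 0))"
    by (rule sum.cong) (use assms Delta_hi in auto)
  finally show ?thesis using assms by simp
qed

lemma cnt_block:
  assumes "b \<ge> 2" "r0 < b"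
  shows "cnt b (b*rt+r0) d (b*M) = real (b - r0) * cnt b rt (d - int r0) M
      + real r0 * cnt b (rt+1) (d + int b - int r0) M"
  unfolding cnt_def sum_blocks block[OF assms]
  by (simp add: sum.distrib sum_distrib_left)

lemma transfer_lim:
  fixes g :: "nat \<Rightarrow> real"
  assumes b: "b > 0" and inc: "\<And>N k. g N \<le> g (N+k) \<and> g (N+k) \<le> g N + real k"
    and lim: "(\<lambda>M. g (b*M) / real (b*M)) \<longlonglongrightarrow> L"
  shows "(\<lambda>N. g N / real N) \<longlonglongrightarrow> L"
proof -
  have q: "filterlim (\<lambda>N. N div b) at_top sequentially"
    by (rule filterlim_at_top_div_const_nat) (use b in auto)
  have A: "(\<lambda>N. g (b*(N div b)) / real (b*(N div b))) \<longlonglongrightarrow> L"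
    using filterlim_compose[OF lim q] by simp
  have bnd: "real N - real b \<le> real (b*(N div b))" "real (b*(N div b)) \<le> real N" for N
  proof -
    have "N = b*(N div b) + N mod b" by simp
    moreover have "N mod b < b" using b by simp
    ultimately show "real N - real b \<le> real (b*(N div b))" "real (b*(N div b)) \<le> real N"
      by (metis add_diff_cancel_left' diff_le_eq le_add1 less_imp_le_nat of_nat_add of_nat_le_iff add.commute)+
  qed
  have B: "(\<lambda>N. real (b*(N div b)) / real N) \<longlonglongrightarrow> 1"
  proof (rule tendsto_sandwich[where f="\<lambda>N. 1 - real b / real N" and h="\<lambda>N. 1"])
    show "\<forall>\<^sub>F N in sequentially. 1 - real b / real N \<le> real (b*(N div b)) / real N"
      using eventually_gt_at_top[of 0]
    proof eventually_elim
      case (elim N)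
      then have "1 - real b / real N = (real N - real b)/real N" by (simp add: field_simps)
      then show ?case using bnd(1)[of N] by (simp add: divide_right_mono)
    qed
    show "\<forall>\<^sub>F N in sequentially. real (b*(N div b)) / real N \<le> 1"
      using eventually_gt_at_top[of 0]
    proof eventually_elim
      case (elim N)
      then show ?case using bnd(2)[of N] by (simp add: field_simps)
    qed
    show "(\<lambda>N. 1 - real b / real N) \<longlonglongrightarrow> 1"
      using tendsto_diff[OF tendsto_const lim_const_over_n[of "real b"]] by simp
  qed simp
  have dif: "0 \<le> g N - g (b*(N div b))" "g N - g (b*(N div b)) \<le> real b" for N
  proof -
    obtain k where k: "N = b*(N div b) + k" "k < b" using b
      by (metis mod_less_divisor mult_div_mod_eq)
    show "0 \<le> g N - g (b*(N div b))" using inc[of "b*(N div b)" k] k by simp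
    show "g N - g (b*(N div b)) \<le> real b" using inc[of "b*(N div b)" k] k by simp
  qed
  have C: "(\<lambda>N. (g N - g (b*(N div b))) / real N) \<longlonglongrightarrow> 0"
  proof (rule tendsto_sandwich[where f="\<lambda>N. 0" and h="\<lambda>N. real b / real N"])
    show "\<forall>\<^sub>F N in sequentially. 0 \<le> (g N - g (b*(N div b))) / real N"
      using dif by simp
    show "\<forall>\<^sub>F N in sequentially. (g N - g (b*(N div b))) / real N \<le> real b / real N"
      using dif by (simp add: divide_right_mono)
  qed (auto intro: lim_const_over_n)
  have D: "(\<lambda>N. g (b*(N div b)) / real (b*(N div b)) * (real (b*(N div b)) / real N)
      + (g N - g (b*(N div b))) / real N) \<longlonglongrightarrow> L * 1 + 0"
    by (intro tendsto_intros A B C)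
  have E: "\<forall>\<^sub>F N in sequentially. g (b*(N div b)) / real (b*(N div b)) * (real (b*(N div b)) / real N)
      + (g N - g (b*(N div b))) / real N = g N / real N"
      using eventually_ge_at_top[of b]
    proof eventually_elim
      case (elim N)
      then have "b*(N div b) > 0" using b by (simp add: div_greater_zero_iff)
      then have "real (b*(N div b)) \<noteq> 0" by linarith
      moreover have "real N \<noteq> 0" using elim b by simp
      ultimately show ?case by (simp add: field_simps)
    qed
  from Lim_transform_eventually[OF D E] show ?thesis by simp
qed

lemma cnt_inc: "cnt b r d N \<le> cnt b r d (N+k) \<and> cnt b r d (N+k) \<le> cnt b r d N + real k"
  by (induction k) (auto simp: cnt_def)

lemma cnt_tendsto:
  assumes b: "b \<ge> 2" "r0 < b"
    and A: "(\<lambda>M. cnt b rt (d - int r0) M / real M) \<longlonglongrightarrow> A"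
    and B: "r0 > 0 \<Longrightarrow> (\<lambda>M. cnt b (rt+1) (d + int b - int r0) M / real M) \<longlonglongrightarrow> B"
  shows "(\<lambda>N. cnt b (b*rt+r0) d N / real N) \<longlonglongrightarrow>
     real (b - r0) / real b * A + real r0 / real b * B"
proof (rule transfer_lim[where b=b])
  show "0 < b" using b by simp
  show "\<And>N k. cnt b (b*rt+r0) d N \<le> cnt b (b*rt+r0) d (N+k) \<and> cnt b (b*rt+r0) d (N+k) \<le> cnt b (b*rt+r0) d N + real k"
    by (rule cnt_inc)
  have T1: "(\<lambda>M. real (b - r0) / real b * (cnt b rt (d - int r0) M / real M)) \<longlonglongrightarrow> real (b - r0) / real b * A"
    by (intro tendsto_intros A)
  have T2: "(\<lambda>M. real r0 / real b * (cnt b (rt+1) (d + int b - int r0) M / real M)) \<longlonglongrightarrow> real r0 / real b * B"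
  proof (cases "r0 = 0")
    case True then show ?thesis by simp
  next
    case False then show ?thesis by (intro tendsto_intros B) simp
  qed
  have E: "\<forall>\<^sub>F M in sequentially. real (b - r0) / real b * (cnt b rt (d - int r0) M / real M)
     + real r0 / real b * (cnt b (rt+1) (d + int b - int r0) M / real M) = cnt b (b*rt+r0) d (b*M) / real (b*M)"
    using eventually_gt_at_top[of 0]
  proof eventually_elim
    case (elim M)
    then have "real M \<noteq> 0" "real b \<noteq> 0" using b by auto
    then show ?case unfolding cnt_block[OF b] by (simp add: field_simps)
  qed
  from Lim_transform_eventually[OF tendsto_add[OF T1 T2] E]
  show "(\<lambda>M. cnt b (b*rt+r0) d (b*M) / real (b*M)) \<longlonglongrightarrow> real (b - r0) / real b * A + real r0 / real b * B" .
qed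

lemma ds_succ_le:
  assumes "b \<ge> 2" shows "digit_sum b (n+1) \<le> digit_sum b n + 1"
proof (induction n rule: less_induct)
  case (less n)
  define m j where "m = n div b" and "j = n mod b"
  have n: "n = b*m + j" and j: "j < b" using assms by (auto simp: m_def j_def)
  show ?case
  proof (cases "j + 1 < b")
    case True
    have "digit_sum b (n+1) = digit_sum b m + (j+1)"
      unfolding n add.assoc by (rule ds_step) (use assms True in auto)
    then show ?thesis using ds_step[OF assms j, of m] n by simp
  next
    case False
    then have jj: "j = b - 1" using j by simp
    have "n + 1 = b*(m+1) + 0" using n jj assms by simp
    then have "digit_sum b (n+1) = digit_sum b (m+1)"
      using ds_step[OF assms, of 0 "m+1"] assms by simp
    moreover have "m < n"
    proof -
      have "m \<le> b*m" using assms by simp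
      moreover have "j \<ge> 1" using jj assms by simp
      ultimately show ?thesis using n by linarith
    qed
    ultimately have "digit_sum b (n+1) \<le> digit_sum b m + 1" using less by simp
    then show ?thesis using ds_step[OF assms j, of m] n by simp
  qed
qed

lemma cnt0: "cnt b 0 d N = (if d = 0 then real N else 0)"
  by (simp add: cnt_def Delta_def)

lemma conv_all:
  assumes b: "b \<ge> 2"
  shows "convergent (\<lambda>N. cnt b r d N / real N)"
proof (induction r arbitrary: d rule: less_induct)
  case (less r)
  have c0: "convergent (\<lambda>N. cnt b 0 e N / real N)" for e
  proof -
    have "(\<lambda>N. (if e = 0 then 1 else 0::real)) \<longlonglongrightarrow> (if e = 0 then 1 else 0)" by simp
    moreover have "\<forall>\<^sub>F N in sequentially. (if e = 0 then 1 else 0::real) = cnt b 0 e N / real N"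
      using eventually_gt_at_top[of 0] by eventually_elim (simp add: cnt0)
    ultimately show ?thesis unfolding convergent_def by (blast intro: Lim_transform_eventually)
  qed
  show ?case
  proof (cases "r = 0")
    case True then show ?thesis using c0 by simp
  next
    case r0: False
    show ?thesis
    proof (cases "r = 1")
      case True
      have c1: "\<forall>e. nat (2 - e) \<le> k \<longrightarrow> convergent (\<lambda>N. cnt b 1 e N / real N)" for k
      proof (induction k)
        case 0
        show ?case
        proof (intro allI impI)
          fix e :: int assume "nat (2 - e) \<le> 0"
          then have e: "e \<ge> 2" by simp
          have "Delta b 1 n \<noteq> e" for n using ds_succ_le[OF b, of n] e by (simp add: Delta_def)
          then have "cnt b 1 e N = 0" for N by (simp add: cnt_def)
          then show "convergent (\<lambda>N. cnt b 1 e N / real N)" by (simp add: convergent_const)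
        qed
      next
        case (Suc k)
        show ?case
        proof (intro allI impI)
          fix e :: int assume ek: "nat (2 - e) \<le> Suc k"
          show "convergent (\<lambda>N. cnt b 1 e N / real N)"
          proof (cases "e \<ge> 2")
            case True
            then show ?thesis using Suc.IH by simp
          next
            case False
            have "convergent (\<lambda>N. cnt b 1 (e + int b - int 1) N / real N)"
              using Suc.IH ek False b by auto
            then have B: "(\<lambda>N. cnt b (0+1) (e + int b - int 1) N / real N) \<longlonglongrightarrow> lim (\<lambda>N. cnt b 1 (e + int b - int 1) N / real N)"
              by (simp add: convergent_LIMSEQ_iff)
            have A: "(\<lambda>N. cnt b 0 (e - int 1) N / real N) \<longlonglongrightarrow> lim (\<lambda>N. cnt b 0 (e - int 1) N / real N)"
              using c0 by (simp add: convergent_LIMSEQ_iff)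
            have "1 < b" using b by simp
            from cnt_tendsto[OF b this A B] show ?thesis
              unfolding convergent_def by auto
          qed
        qed
      qed
      show ?thesis using c1[of "nat (2 - d)"] True by simp
    next
      case r1: False
      define rt q where "rt = r div b" and "q = r mod b"
      have r: "r = b*rt + q" and q: "q < b" using b by (auto simp: rt_def q_def)
      have lt: "rt < r" using r0 b unfolding rt_def by simp
      have A: "(\<lambda>M. cnt b rt (d - int q) M / real M) \<longlonglongrightarrow> lim (\<lambda>M. cnt b rt (d - int q) M / real M)"
        using less.IH[OF lt] by (simp add: convergent_LIMSEQ_iff)
      have B: "(\<lambda>M. cnt b (rt+1) (d + int b - int q) M / real M) \<longlonglongrightarrow> lim (\<lambda>M. cnt b (rt+1) (d + int b - int q) M / real M)"
        if "q > 0"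
      proof -
        have "rt + 1 < r"
        proof (cases "rt = 0")
          case True then show ?thesis using r r1 r0 by simp
        next
          case False
          have "2*rt \<le> b*rt" using b by simp
          then show ?thesis using r False that by linarith
        qed
        then show ?thesis using less.IH by (simp add: convergent_LIMSEQ_iff)
      qed
      from cnt_tendsto[OF b q A B] show ?thesis unfolding convergent_def r by auto
    qed
  qed
qed

theorem mainTheorem8:
  fixes b rt r0 :: nat and d :: int
  assumes "b \<ge> 2" and "r0 < b"
  shows "mu b (b * rt + r0) d
       = real (b - r0) / real b * mu b rt (d - int r0)
         + real r0 / real b * mu b (rt + 1) (d + int b - int r0)"
proof -
  have mu: "mu b r e = lim (\<lambda>N. cnt b r e N / real N)" for r e
    by (simp add: mu_def card_cnt)
  have A: "(\<lambda>M. cnt b rt (d - int r0) M / real M) \<longlonglongrightarrow> mu b rt (d - int r0)"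
    using conv_all[OF assms(1)] by (simp add: mu convergent_LIMSEQ_iff)
  have B: "(\<lambda>M. cnt b (rt+1) (d + int b - int r0) M / real M) \<longlonglongrightarrow> mu b (rt+1) (d + int b - int r0)"
    using conv_all[OF assms(1)] by (simp add: mu convergent_LIMSEQ_iff)
  show ?thesis unfolding mu[of "b*rt+r0"] using cnt_tendsto[OF assms A B] by (rule limI)
qed

end
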